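(* Let $\alpha=(\alpha_1,\ldots,\alpha_n)$ be a composition, $\sigma\in S_n$, $i\in\{1,\ldots,n-1\}$ with $\alpha_i=\alpha_{i+1}$, and $\beta$ a composition of length $n$. Then the restrictions $P_i:\mathrm{NAF}(\alpha,\sigma,\beta)\times\mathrm{NAF}(\alpha,\sigma s_i,\beta)\to\mathbb{Q}(q,t)$ and $P_i:\mathrm{NAF}(\alpha,\sigma s_i,\beta)\times\mathrm{NAF}(\alpha,\sigma,\beta)\to\mathbb{Q}(q,t)$ form a probabilistic bijection between $\mathrm{NAF}(\alpha,\sigma,\beta)$ and $\mathrm{NAF}(\alpha,\sigma s_i,\beta)$ with respect to the weight $\mathrm{wt}_{q,t}$.
   Context: Permutations are in one-line notation; $\sigma s_i$ is $\sigma$ with the entries in positions $i,i+1$ exchanged. A composition is a sequence of nonnegative integers. The skyline diagram is $\mathrm{dg}(\alpha)=\{(j,r):1\le j\le n,\ 1\le r\le\alpha_j\}$ ($j$ = column, $r$ = row) and the augmented diagram is $\mathrm{adg}(\alpha)=\mathrm{dg}(\alpha)\cup\{(j,0):1\le j\le n\}$ (row $0$ is the basement). For $u=(j,r)\in\mathrm{dg}(\alpha)$: $\mathrm{south}(u)=(j,r-1)$; $\mathrm{leg}(u)=\alpha_j-r$; the left arm set is $\{(j',r-1)\in\mathrm{adg}(\alpha):j'<j,\ \alpha_{j'}<\alpha_j\}$, the right arm set is $\{(j',r)\in\mathrm{dg}(\alpha):j'>j,\ \alpha_{j'}\le\alpha_j\}$, $\mathrm{Arm}(u)$ is their union and $\mathrm{arm}(u)=|\mathrm{Arm}(u)|$.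 Two boxes of $\mathrm{adg}(\alpha)$ attack each other if they are in the same row, or in consecutive rows with the box in the higher row strictly to the right of the box in the lower row. A filling of shape $\alpha$ and basement $\tau\in S_n$ is a map $T:\mathrm{adg}(\alpha)\to\{1,\ldots,n\}$ with $T(j,0)=\tau_j$; $\mathrm{NAF}(\alpha,\tau)$ is the set of non-attacking ones (attacking boxes have distinct entries). The content of $T$ is $(\beta_1,\ldots,\beta_n)$ with $\beta_k=|\{u\in\mathrm{dg}(\alpha):T(u)=k\}|$ (basement boxes not counted); $\mathrm{NAF}(\alpha,\tau,\beta)$ is the set of non-attacking fillings with content $\beta$. For integers $a,b$ let $\chi(a,b)=1$ if $a>b$ and $0$ otherwise, and $\chi(a,b,c)=\chi(a,b)+\chi(b,c)-\chi(a,c)$. For $T$ non-attacking: a descent is $u\in\mathrm{dg}(\alpha)$ with $T(u)>T(\mathrm{south}(u))$, $\mathrm{maj}(T)=\sum_{u\text{ descent}}(\mathrm{leg}(u)+1)$; a triple is $(u,v,w)$ with $u\in\mathrm{dg}(\alpha)$, $w=\mathrm{south}(u)$, $v\in\mathrm{Arm}(u)$, an inversion triple if $\chi(T(u),T(v),T(w))=1$ and a coinversion triple otherwise; $\mathrm{coinv}(T)$ is the number of coinversion triples; $\mathrm{wt}_{q,t}(T)=q^{\mathrm{maj}(T)}t^{\mathrm{coinv}(T)}\prod_{u\in\mathrm{dg}(\alpha),\,T(u)\ne T(\mathrm{south}(u))}\frac{1-t}{1-q^{1+\mathrm{leg}(u)}t^{1+\mathrm{arm}(u)}}$. Fix $i$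 with $\alpha_i=\alpha_{i+1}$. For a filling $T$ and $0\le r\le\alpha_i$, $\mathrm{swap}_r(T)$ exchanges the entries of boxes $(i,r)$ and $(i+1,r)$, and $\Omega_{0,h}=\mathrm{swap}_h\circ\cdots\circ\mathrm{swap}_0$. For $T\in\mathrm{NAF}(\alpha,\tau)$ and $0\le r\le\alpha_i-1$, let $a=T(i,r)$, $b=T(i+1,r)$, $c=T(i,r+1)$, $d=T(i+1,r+1)$, $A=\mathrm{arm}(i+1,r+1)$, $\ell=\mathrm{leg}(i+1,r+1)$, and define $\rho_r(T)$: if $a,b,c,d$ are distinct, $\rho_r(T)=0$ when $\chi(c,d,a)=\chi(c,d,b)$ and $1$ when $\chi(c,d,a)=\chi(d,c,b)$; if exactly three are distinct, $\rho_r(T)=0$ if $b=c$, $1$ if $b=d$, and $t^{1-\chi(d,a,b)}\frac{1-q^{\ell+1}t^{A+1}}{1-q^{\ell+1}t^{A+2}}$ if $a=c$; if $a=c$ and $b=d$, $\rho_r(T)=1$; and $\rho_{\alpha_i}(T)=0$. For $T\in\mathrm{NAF}(\alpha,\tau)$ and a filling $U$ with basement $\tau s_i$, $P_i(T,U)=\left(\prod_{r=0}^{h-1}\rho_r(T)\right)(1-\rho_h(T))$ if $U=\Omega_{0,h}(T)$ for some $h\in\{0,\ldots,\alpha_i\}$ and $0$ otherwise (used with $\tau=\sigma$ and $\tau=\sigma s_i$). A probabilistic bijection between $(\mathbf{T},\mathrm{wt})$ and $(\mathbf{U},\mathrm{wt})$ is a pair $P_{\mathbf{T}}:\mathbf{T}\times\mathbf{U}\to\mathbb{Q}(q,t)$,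 $P_{\mathbf{U}}:\mathbf{U}\times\mathbf{T}\to\mathbb{Q}(q,t)$ with $\sum_UP_{\mathbf{T}}(T,U)=1$ for all $T$, $\sum_TP_{\mathbf{U}}(U,T)=1$ for all $U$, and $\mathrm{wt}(T)P_{\mathbf{T}}(T,U)=\mathrm{wt}(U)P_{\mathbf{U}}(U,T)$ for all $T,U$. *)

theory Defs
  imports "HOL-Computational_Algebra.Polynomial" "HOL-Computational_Algebra.Fraction_Field"
begin

text \<open>The field Q(q,t): fraction field of Q[q][t] (outer polynomial variable t,
  coefficients polynomials in q over the rationals).\<close>
type_synonym qt = "rat poly poly fract"

definition qv :: qt where "qv = Fract [:[:0, 1:]:] 1"
definition tv :: qt where "tv = Fract [:0, 1:] 1"

text \<open>Compositions are lists; entries are 1-indexed: col alpha j = alpha_j.\<close>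
definition col :: "nat list \<Rightarrow> nat \<Rightarrow> nat" where
  "col xs j = xs ! (j - 1)"

text \<open>Permutations in S_n in one-line notation (lists of 1..n).\<close>
definition is_perm :: "nat \<Rightarrow> nat list \<Rightarrow> bool" where
  "is_perm n s \<longleftrightarrow> distinct s \<and> set s = {1..n}"

definition perm_si :: "nat list \<Rightarrow> nat \<Rightarrow> nat list" where
  "perm_si s i = s[i - 1 := s ! i, i := s ! (i - 1)]"

text \<open>Boxes are (column, row).\<close>
definition dg :: "nat list \<Rightarrow> (nat \<times> nat) set" where
  "dg a = {(j, r). 1 \<le> j \<and> j \<le> length a \<and> 1 \<le> r \<and> r \<le> col a j}"

definition adg :: "nat list \<Rightarrow> (nat \<times> nat) set" where
  "adg a = dg a \<union> {(j, 0) | j. 1 \<le> j \<and> j \<le> length a}"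

fun south :: "nat \<times> nat \<Rightarrow> nat \<times> nat" where
  "south (j, r) = (j, r - 1)"

fun leg :: "nat list \<Rightarrow> nat \<times> nat \<Rightarrow> nat" where
  "leg a (j, r) = col a j - r"

fun Arm :: "nat list \<Rightarrow> nat \<times> nat \<Rightarrow> (nat \<times> nat) set" where
  "Arm a (j, r) =
     {(j', r'). (j', r') \<in> adg a \<and> r' = r - 1 \<and> j' < j \<and> col a j' < col a j}
   \<union> {(j', r'). (j', r') \<in> dg a \<and> r' = r \<and> j' > j \<and> col a j' \<le> col a j}"

definition arm :: "nat list \<Rightarrow> nat \<times> nat \<Rightarrow> nat" where
  "arm a u = card (Arm a u)"

fun attacks :: "nat \<times> nat \<Rightarrow> nat \<times> nat \<Rightarrow> bool" where
  "attacks (j, r) (j', r') \<longleftrightarrow>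
     (r = r' \<and> j \<noteq> j') \<or> (r' = r + 1 \<and> j' > j) \<or> (r = r' + 1 \<and> j > j')"

text \<open>Fillings are total functions, normalised to 0 outside the augmented diagram.\<close>
definition filling :: "nat list \<Rightarrow> nat list \<Rightarrow> (nat \<times> nat \<Rightarrow> nat) \<Rightarrow> bool" where
  "filling a tau T \<longleftrightarrow>
     (\<forall>u \<in> adg a. T u \<in> {1..length a}) \<and> (\<forall>u. u \<notin> adg a \<longrightarrow> T u = 0) \<and>
     (\<forall>j. 1 \<le> j \<and> j \<le> length a \<longrightarrow> T (j, 0) = col tau j)"

definition nonattacking :: "nat list \<Rightarrow> (nat \<times> nat \<Rightarrow> nat) \<Rightarrow> bool" where
  "nonattacking a T \<longleftrightarrow> (\<forall>u \<in> adg a. \<forall>v \<in> adg a. attacks u v \<longrightarrow> T u \<noteq> T v)"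

definition content :: "nat list \<Rightarrow> (nat \<times> nat \<Rightarrow> nat) \<Rightarrow> nat list" where
  "content a T = map (\<lambda>k. card {u \<in> dg a. T u = k}) [1..<length a + 1]"

definition NAF :: "nat list \<Rightarrow> nat list \<Rightarrow> (nat \<times> nat \<Rightarrow> nat) set" where
  "NAF a tau = {T. filling a tau T \<and> nonattacking a T}"

definition NAFc :: "nat list \<Rightarrow> nat list \<Rightarrow> nat list \<Rightarrow> (nat \<times> nat \<Rightarrow> nat) set" where
  "NAFc a tau beta = {T \<in> NAF a tau. content a T = beta}"

definition chi :: "nat \<Rightarrow> nat \<Rightarrow> int" where
  "chi x y = (if x > y then 1 else 0)"

definition chi3 :: "nat \<Rightarrow> nat \<Rightarrow> nat \<Rightarrow> int" where
  "chi3 x y z = chi x y + chi y z - chi x z"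

definition maj :: "nat list \<Rightarrow> (nat \<times> nat \<Rightarrow> nat) \<Rightarrow> nat" where
  "maj a T = (\<Sum>u \<in> {u \<in> dg a. T u > T (south u)}. leg a u + 1)"

definition coinv :: "nat list \<Rightarrow> (nat \<times> nat \<Rightarrow> nat) \<Rightarrow> nat" where
  "coinv a T = card {(u, v, w). u \<in> dg a \<and> w = south u \<and> v \<in> Arm a u \<and>
                      chi3 (T u) (T v) (T w) \<noteq> 1}"

definition wt :: "nat list \<Rightarrow> (nat \<times> nat \<Rightarrow> nat) \<Rightarrow> qt" where
  "wt a T = qv ^ maj a T * tv ^ coinv a T *
     (\<Prod>u \<in> {u \<in> dg a. T u \<noteq> T (south u)}.
        (1 - tv) / (1 - qv ^ (1 + leg a u) * tv ^ (1 + arm a u)))"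

definition swap :: "nat \<Rightarrow> nat \<Rightarrow> (nat \<times> nat \<Rightarrow> nat) \<Rightarrow> (nat \<times> nat \<Rightarrow> nat)" where
  "swap i r T = T((i, r) := T (i + 1, r), (i + 1, r) := T (i, r))"

fun Omega :: "nat \<Rightarrow> nat \<Rightarrow> (nat \<times> nat \<Rightarrow> nat) \<Rightarrow> (nat \<times> nat \<Rightarrow> nat)" where
  "Omega i 0 T = swap i 0 T"
| "Omega i (Suc h) T = swap i (Suc h) (Omega i h T)"

definition rho :: "nat list \<Rightarrow> nat \<Rightarrow> (nat \<times> nat \<Rightarrow> nat) \<Rightarrow> nat \<Rightarrow> qt" where
  "rho al i T r =
    (if r = col al i then 0 else
     let a = T (i, r); b = T (i + 1, r); c = T (i, r + 1); d = T (i + 1, r + 1);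
         A = arm al (i + 1, r + 1); l = leg al (i + 1, r + 1) in
     if card {a, b, c, d} = 4 then
       (if chi3 c d a = chi3 c d b then 0
        else if chi3 c d a = chi3 d c b then 1 else 0)
     else if card {a, b, c, d} = 3 then
       (if b = c then 0
        else if b = d then 1
        else if a = c then
          tv ^ nat (1 - chi3 d a b) * ((1 - qv ^ (l + 1) * tv ^ (A + 1)) / (1 - qv ^ (l + 1) * tv ^ (A + 2)))
        else 0)
     else if a = c \<and> b = d then 1
     else 0)"

definition Pi :: "nat list \<Rightarrow> nat \<Rightarrow> (nat \<times> nat \<Rightarrow> nat) \<Rightarrow> (nat \<times> nat \<Rightarrow> nat) \<Rightarrow> qt" where
  "Pi al i T U =
    (if \<exists>h \<le> col al i. U = Omega i h T then
       (let h = (SOME h. h \<le> col al i \<and> U = Omega i h T) in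
         (\<Prod>r < h. rho al i T r) * (1 - rho al i T h))
     else 0)"

definition prob_bij :: "'t set \<Rightarrow> 'u set \<Rightarrow> ('t \<Rightarrow> 'k::field) \<Rightarrow> ('u \<Rightarrow> 'k)
    \<Rightarrow> ('t \<Rightarrow> 'u \<Rightarrow> 'k) \<Rightarrow> ('u \<Rightarrow> 't \<Rightarrow> 'k) \<Rightarrow> bool" where
  "prob_bij TT UU wT wU PT PU \<longleftrightarrow>
     (\<forall>T \<in> TT. (\<Sum>U \<in> UU. PT T U) = 1) \<and>
     (\<forall>U \<in> UU. (\<Sum>T \<in> TT. PU U T) = 1) \<and>
     (\<forall>T \<in> TT. \<forall>U \<in> UU. wT T * PT T U = wU U * PU U T)"

end

theory Submission
  imports Defs
begin


lemma card4: "distinct [a,b,c,d] \<Longrightarrow> card {a,b,c,d} = 4"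
  using distinct_card[of "[a,b,c,d]"] by simp
lemma card3: "distinct [a,b,c] \<Longrightarrow> card {a,b,c} = 3"
  using distinct_card[of "[a,b,c]"] by simp
lemma card2: "a \<noteq> b \<Longrightarrow> card {a,b} = 2"
  by simp

lemma key1: fixes D1 :: "'a::field" shows "D1 \<noteq> 0 \<Longrightarrow> X * P * (u / D1) * (z * (D1 / D2)) = X * (P * z) * (u / D2)"
  by (cases "D2 = 0") (simp_all add: field_simps)

lemma chi3_xyx: "x \<noteq> y \<Longrightarrow> chi3 x y x = 1"
  unfolding chi3_def chi_def by auto

lemma chi3_01: "chi3 x y z = 0 \<or> chi3 x y z = 1"
  unfolding chi3_def chi_def by auto

lemma chi3_swap: "x \<noteq> y \<Longrightarrow> chi3 y x z = 1 - chi3 x y z"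
  unfolding chi3_def chi_def by auto

definition Ef :: "'a::field \<Rightarrow> 'a \<Rightarrow> nat \<Rightarrow> nat \<Rightarrow> nat \<Rightarrow> 'a" where
 "Ef Q t n x y = (if x \<noteq> y then (1 - t) / (1 - Q * t^(n+1)) else 1)"

definition RG :: "'a::field \<Rightarrow> 'a \<Rightarrow> nat \<Rightarrow> (nat \<Rightarrow> nat \<Rightarrow> nat) \<Rightarrow> nat \<Rightarrow> nat \<Rightarrow> nat \<Rightarrow> nat \<Rightarrow> 'a" where
 "RG Q t A K a b c d = (if c > a then Q else 1) * (if d > b then Q else 1) *
    t ^ (K c a + K d b + (if chi3 c d a \<noteq> 1 then 1 else 0)) * Ef Q t (A+1) c a * Ef Q t A d b"

definition RH :: "'a::field \<Rightarrow> 'a \<Rightarrow> nat \<Rightarrow> nat \<Rightarrow> nat \<Rightarrow> nat \<Rightarrow> nat \<Rightarrow> 'a" where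
 "RH Q t A a b c d =
     (if card {a, b, c, d} = 4 then
       (if chi3 c d a = chi3 c d b then 0
        else if chi3 c d a = chi3 d c b then 1 else 0)
     else if card {a, b, c, d} = 3 then
       (if b = c then 0
        else if b = d then 1
        else if a = c then
          t ^ nat (1 - chi3 d a b) * ((1 - Q * t ^ (A + 1)) / (1 - Q * t ^ (A + 2)))
        else 0)
     else if a = c \<and> b = d then 1
     else 0)"

lemma interior:
  fixes Q t :: "'a::field"
  assumes "a\<noteq>b" "c\<noteq>d" "a\<noteq>d" "b\<noteq>c" and D1: "1 - Q*t^(A+1) \<noteq> 0" and D2: "1 - Q*t^(A+2) \<noteq> 0"
  shows "RG Q t A K a b c d * RH Q t A a b c d = RG Q t A K b a d c * RH Q t A b a d c"
proof -
  have ne: "b\<noteq>a" "d\<noteq>c" "d\<noteq>a" "c\<noteq>b" using assms by auto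
  consider (four) "a \<noteq> c" "b \<noteq> d" | (ac) "a = c" "b \<noteq> d" | (bd) "a \<noteq> c" "b = d" | (two) "a = c" "b = d"
    by blast
  then show ?thesis
  proof cases
    case four
    then have "c\<noteq>a" "d\<noteq>b" by auto
    with four have c4: "card {a,b,c,d} = 4" "card {b,a,d,c} = 4" using assms ne four by (auto intro!: card4)
    have s1: "chi3 d c b = 1 - chi3 c d b" "chi3 d c a = 1 - chi3 c d a" using chi3_swap[OF assms(2)] by auto
    show ?thesis
    proof (cases "chi3 c d a = chi3 c d b")
      case True
      then show ?thesis unfolding RH_def using c4 s1 by simp
    next
      case False
      then have e: "chi3 c d a = chi3 d c b" using s1 chi3_01[of c d a] chi3_01[of c d b] by auto
      have r1: "RH Q t A a b c d = 1" "RH Q t A b a d c = 1" unfolding RH_def using c4 s1 e False by auto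
      show ?thesis unfolding r1 RG_def Ef_def using four assms e[symmetric] by (simp add: ac_simps)
    qed
  next
    case ac
    then have "d\<noteq>b" by auto
    with ac have "{a,b,c,d} = {a,b,d}" "{b,a,d,c} = {b,a,d}" by auto
    then have c3: "card {a,b,c,d} = 3" "card {b,a,d,c} = 3" using assms ne ac \<open>d\<noteq>b\<close> by (auto intro!: card3)
    have r: "RH Q t A b a d c = 1" unfolding RH_def using c3 ac assms by auto
    have r2: "RH Q t A a b c d = t ^ nat (1 - chi3 d a b) * ((1 - Q * t ^ (A + 1)) / (1 - Q * t ^ (A + 2)))"
      unfolding RH_def using c3 ac assms by auto
    have x: "chi3 a d a = 1" unfolding chi3_def chi_def using assms ac by auto
    have y: "nat (1 - chi3 d a b) = (if chi3 d c b \<noteq> 1 then 1 else 0)" using chi3_01[of d a b] ac by auto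
    define X where "X = (if d > b then Q else (1::'a))"
    define e where "e = nat (1 - chi3 d a b)"
    have L: "RG Q t A K a b c d = X * t^(K c a + K d b) * ((1-t)/(1-Q*t^(A+1)))"
      unfolding RG_def Ef_def X_def using ac assms x by simp
    have R: "RG Q t A K b a d c = X * (t^(K c a + K d b) * t^e) * ((1-t)/(1-Q*t^(A+2)))"
      unfolding RG_def Ef_def X_def e_def y using ac assms by (simp add: power_add mult_ac)
    show ?thesis unfolding r r2 L R e_def[symmetric] mult_1_right by (rule key1[OF D1])
  next
    case bd
    then have "c\<noteq>a" by auto
    with bd have "{a,b,c,d} = {a,b,c}" "{b,a,d,c} = {b,a,c}" by auto
    then have c3: "card {a,b,c,d} = 3" "card {b,a,d,c} = 3" using assms ne bd \<open>c\<noteq>a\<close> by (auto intro!: card3)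
    have r: "RH Q t A a b c d = 1" unfolding RH_def using c3 bd assms by auto
    have r2: "RH Q t A b a d c = t ^ nat (1 - chi3 c b a) * ((1 - Q * t ^ (A + 1)) / (1 - Q * t ^ (A + 2)))"
      unfolding RH_def using c3 bd assms by auto
    have x: "chi3 b c b = 1" unfolding chi3_def chi_def using assms bd by auto
    have y: "nat (1 - chi3 c b a) = (if chi3 c d a \<noteq> 1 then 1 else 0)" using chi3_01[of c b a] bd by auto
    define X where "X = (if c > a then Q else (1::'a))"
    define e where "e = nat (1 - chi3 c b a)"
    have R: "RG Q t A K b a d c = X * t^(K c a + K d b) * ((1-t)/(1-Q*t^(A+1)))"
      unfolding RG_def Ef_def X_def using bd assms x by (simp add: mult_ac add_ac)
    have L: "RG Q t A K a b c d = X * (t^(K c a + K d b) * t^e) * ((1-t)/(1-Q*t^(A+2)))"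
      unfolding RG_def Ef_def X_def e_def y using bd assms by (simp add: power_add mult_ac)
    show ?thesis unfolding r r2 L R e_def[symmetric] mult_1_right by (rule key1[OF D1, symmetric])
  next
    case two
    then have "{a,b,c,d} = {a,b}" "{b,a,d,c} = {a,b}" by auto
    then have "card {a,b,c,d} = 2" "card {b,a,d,c} = 2" using assms by auto
    then show ?thesis unfolding RH_def RG_def Ef_def using two assms chi3_xyx[of c d] chi3_xyx[of d c] by (simp add: mult_ac add_ac)
  qed
qed


lemma qlem: "chi x y + chi z w = chi x' y' + k \<Longrightarrow> k = 0 \<or> k = 1 \<Longrightarrow>
   (if y<x then Q else 1)*(if w<z then Q else 1) = (if y'<x' then Q else 1) * (if k=1 then Q else (1::'a::field))"
  unfolding chi_def by (auto split: if_splits)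

lemma qlem2: "chi x y + chi z w = chi x' y' + chi z' w' \<Longrightarrow>
   (if y<x then Q else 1)*(if w<z then Q else 1) = (if y'<x' then Q else 1) * (if w'<z' then Q else (1::'a::field))"
  unfolding chi_def by (auto split: if_splits)

lemma frac1: fixes Q t :: "'a::field" assumes "1 - Q*t^(A+2) \<noteq> 0"
  shows "1 - (1 - Q*t^(A+1))/(1-Q*t^(A+2)) = Q*t^(A+1) * ((1-t)/(1-Q*t^(A+1+1)))"
  using assms by (simp add: field_simps)

lemma frac0: fixes Q t :: "'a::field" assumes "1 - Q*t^(A+2) \<noteq> 0"
  shows "1 - t*((1 - Q*t^(A+1))/(1-Q*t^(A+2))) = (1-t)/(1-Q*t^(A+1+1))"
  using assms by (simp add: field_simps)

lemma bnd_ac: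
  fixes Q t :: "'a::field"
  assumes "a\<noteq>b" "a\<noteq>d" "b\<noteq>d" and D1: "1 - Q*t^(A+1) \<noteq> 0" and D2: "1 - Q*t^(A+2) \<noteq> 0"
    and rel: "int (K a b) + int (K d a) + int A * (chi a a + chi d b) = int (K a a) + int (K d b) + int A * (chi a b + chi d a)"
  shows "RG Q t A K a b a d * (1 - RH Q t A a b a d) = RG Q t A K b a a d * (1 - RH Q t A b a a d)"
proof -
  have ne: "b\<noteq>a" "d\<noteq>a" "d\<noteq>b" using assms by auto
  have "{a,b,a,d} = {a,b,d}" "{b,a,a,d} = {b,a,d}" by auto
  then have c3: "card {a,b,a,d} = 3" "card {b,a,a,d} = 3" using assms ne by (auto intro!: card3)
  have r2: "RH Q t A b a a d = 0" unfolding RH_def using c3 by simp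
  have r1: "RH Q t A a b a d = t ^ nat (1 - chi3 d a b) * ((1 - Q * t ^ (A + 1)) / (1 - Q * t ^ (A + 2)))"
    unfolding RH_def using c3 assms ne by simp
  define Y where "Y = (if b < d then Q else (1::'a))"
  define e where "e = chi3 d a b"
  have e01: "e = 0 \<or> e = 1" unfolding e_def by (rule chi3_01)
  have ce: "chi3 a d b = 1 - e" unfolding e_def using chi3_swap[OF ne(2)] by simp
  have he: "chi a b + chi d a = chi d b + e" unfolding e_def chi3_def by simp
  have chaa: "chi a a = 0" unfolding chi_def by simp
  have Keq: "K a b + K d a = K a a + K d b + A * nat e"
  proof -
    have "int (K a b) + int (K d a) = int (K a a) + int (K d b) + int A * e"
      using rel he chaa by (simp add: algebra_simps)
    then show ?thesis using e01 by auto
  qed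
  have LT: "RG Q t A K a b a d = Y * t^(K a a + K d b) * ((1-t)/(1-Q*t^(A+1)))"
    unfolding RG_def Ef_def Y_def using assms ne chi3_xyx[OF ne(2)[symmetric]] by simp
  have QU: "(if b < a then Q else 1) * (if a < d then Q else 1) = Y * (if e = 1 then Q else 1)"
    unfolding Y_def by (rule qlem[OF he e01])
  have RU: "RG Q t A K b a a d = Y * (if e = 1 then Q else 1) * t^(K a a + K d b + A * nat e + (if e = 1 then 1 else 0)) * ((1-t)/(1-Q*t^(A+1+1))) * ((1-t)/(1-Q*t^(A+1)))"
  proof -
    have ce2: "(if chi3 a d b \<noteq> 1 then 1 else 0) = (if e = 1 then 1 else (0::nat))" using ce e01 by auto
    have "RG Q t A K b a a d = ((if b < a then Q else 1) * (if a < d then Q else 1)) * t^(K a b + K d a + (if e = 1 then 1 else 0)) * ((1-t)/(1-Q*t^(A+1+1))) * ((1-t)/(1-Q*t^(A+1)))"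
      unfolding RG_def Ef_def ce2 using assms ne by simp
    then show ?thesis unfolding QU Keq .
  qed
  from e01 show ?thesis
  proof
    assume e0: "e = 0"
    have rr: "RH Q t A a b a d = t * ((1 - Q * t ^ (A + 1)) / (1 - Q * t ^ (A + 2)))"
      unfolding r1 e_def[symmetric] e0 by simp
    show ?thesis unfolding LT RU r2 rr frac0[OF D2] using e0 by (simp add: mult_ac)
  next
    assume e1: "e = 1"
    have rr: "RH Q t A a b a d = ((1 - Q * t ^ (A + 1)) / (1 - Q * t ^ (A + 2)))"
      unfolding r1 e_def[symmetric] e1 by simp
    show ?thesis unfolding LT RU r2 rr frac1[OF D2] using e1 by (simp add: mult_ac power_add)
  qed
qed


lemma boundary:
  fixes Q t :: "'a::field"
  assumes "a\<noteq>b" "c\<noteq>d" "a\<noteq>d" "b\<noteq>d" and D1: "1 - Q*t^(A+1) \<noteq> 0" and D2: "1 - Q*t^(A+2) \<noteq> 0"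
    and rel: "int (K c b) + int (K d a) + int A * (chi c a + chi d b) = int (K c a) + int (K d b) + int A * (chi c b + chi d a)"
  shows "RG Q t A K a b c d * (1 - RH Q t A a b c d) = RG Q t A K b a c d * (1 - RH Q t A b a c d)"
proof -
  have ne: "b\<noteq>a" "d\<noteq>c" "d\<noteq>a" "d\<noteq>b" using assms by auto
  consider (ca) "c = a" | (cb) "c = b" | (four) "c \<noteq> a" "c \<noteq> b" by blast
  then show ?thesis
  proof cases
    case ca
    then show ?thesis using bnd_ac[of a b d Q t A K] assms by simp
  next
    case cb
    have "RG Q t A K b a b d * (1 - RH Q t A b a b d) = RG Q t A K a b b d * (1 - RH Q t A a b b d)"
      by (rule bnd_ac) (use assms cb in auto)
    then show ?thesis using cb by simp
  next
    case four
    have c4: "card {a,b,c,d} = 4" "card {b,a,c,d} = 4" using assms ne four by (auto intro!: card4)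
    show ?thesis
    proof (cases "chi3 c d a = chi3 c d b")
      case False
      have s1: "chi3 d c b = 1 - chi3 c d b" "chi3 d c a = 1 - chi3 c d a" using chi3_swap[OF assms(2)] by auto
      have e: "chi3 c d a = chi3 d c b" "chi3 c d b = chi3 d c a" using s1 False chi3_01[of c d a] chi3_01[of c d b] by auto
      have "RH Q t A a b c d = 1" "RH Q t A b a c d = 1" unfolding RH_def using c4 e False by auto
      then show ?thesis by simp
    next
      case True
      have r: "RH Q t A a b c d = 0" "RH Q t A b a c d = 0" unfolding RH_def using c4 True by auto
      have hc: "chi c a + chi d b = chi c b + chi d a" using True unfolding chi3_def by simp
      have Keq: "K c b + K d a = K c a + K d b" using rel hc by simp
      have QQ: "(if a < c then Q else 1) * (if b < d then Q else 1) = (if b < c then Q else 1) * (if a < d then Q else 1)"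
        by (rule qlem2) (rule hc)
      have "RG Q t A K a b c d = (if a < c then Q else 1) * (if b < d then Q else 1) * t^(K c a + K d b + (if chi3 c d a \<noteq> 1 then 1 else 0)) * ((1-t)/(1-Q*t^(A+1+1))) * ((1-t)/(1-Q*t^(A+1)))"
        unfolding RG_def Ef_def using assms ne four by simp
      also have "\<dots> = RG Q t A K b a c d"
        unfolding RG_def Ef_def QQ Keq[symmetric] True using assms ne four by (simp add: add_ac)
      finally show ?thesis unfolding r by simp
    qed
  qed
qed




definition pim :: "nat \<Rightarrow> nat \<Rightarrow> nat \<times> nat \<Rightarrow> nat \<times> nat" where
  "pim i h u = (if snd u \<le> h \<and> fst u = i then (Suc i, snd u)
                else if snd u \<le> h \<and> fst u = Suc i then (i, snd u) else u)"

lemma pim_simps: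
  "pim i h (i, r) = (if r \<le> h then (Suc i, r) else (i, r))"
  "pim i h (Suc i, r) = (if r \<le> h then (i, r) else (Suc i, r))"
  "j \<noteq> i \<Longrightarrow> j \<noteq> Suc i \<Longrightarrow> pim i h (j, r) = (j, r)"
  "r > h \<Longrightarrow> pim i h (j, r) = (j, r)"
  by (auto simp: pim_def)

lemma pim_pim[simp]: "pim i h (pim i h u) = u"
  by (cases u) (auto simp: pim_def)

lemma snd_pim[simp]: "snd (pim i h u) = snd u"
  by (auto simp: pim_def)

lemma inj_pim: "inj (pim i h)"
  by (metis injI pim_pim)

lemma Omega_eq: "Omega i h T = T \<circ> pim i h"
proof (induction h)
  case 0
  show ?case by (auto simp: swap_def pim_def fun_eq_iff)
next
  case (Suc h)
  show ?case unfolding Omega.simps Suc by (auto simp: swap_def pim_def fun_eq_iff)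
qed

lemma Omega_Omega: "Omega i h (Omega i h T) = T"
  unfolding Omega_eq by (auto simp: fun_eq_iff)

lemma adg_iff: "(j, r) \<in> adg a \<longleftrightarrow> 1 \<le> j \<and> j \<le> length a \<and> r \<le> col a j"
  unfolding adg_def dg_def by auto

lemma dg_iff: "(j, r) \<in> dg a \<longleftrightarrow> 1 \<le> j \<and> j \<le> length a \<and> 1 \<le> r \<and> r \<le> col a j"
  unfolding dg_def by auto

lemma finite_dg: "finite (dg a)"
proof -
  have "dg a \<subseteq> Sigma {1..length a} (\<lambda>j. {1..col a j})" unfolding dg_def by auto
  then show ?thesis by (rule finite_subset) auto
qed

lemma finite_adg: "finite (adg a)"
proof -
  have "adg a \<subseteq> Sigma {1..length a} (\<lambda>j. {0..col a j})" unfolding adg_def dg_def by auto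
  then show ?thesis by (rule finite_subset) auto
qed

lemma Arm_sub: "Arm a u \<subseteq> adg a"
  by (cases u) (auto simp: adg_def)

lemma finite_Arm: "finite (Arm a u)"
  using finite_subset[OF Arm_sub finite_adg] .

definition gw :: "nat list \<Rightarrow> (nat \<times> nat \<Rightarrow> nat) \<Rightarrow> nat \<times> nat \<Rightarrow> qt" where
  "gw a T u = qv ^ (if T (south u) < T u then leg a u + 1 else 0) *
     tv ^ card {v \<in> Arm a u. chi3 (T u) (T v) (T (south u)) \<noteq> 1} *
     (if T u \<noteq> T (south u) then (1 - tv) / (1 - qv ^ (1 + leg a u) * tv ^ (1 + arm a u)) else 1)"

lemma coinv_sum: "coinv a T = (\<Sum>u\<in>dg a. card {v \<in> Arm a u. chi3 (T u) (T v) (T (south u)) \<noteq> 1})"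
proof -
  have "{(u, v, w). u \<in> dg a \<and> w = south u \<and> v \<in> Arm a u \<and> chi3 (T u) (T v) (T w) \<noteq> 1}
      = (\<Union>u\<in>dg a. (\<lambda>v. (u, v, south u)) ` {v \<in> Arm a u. chi3 (T u) (T v) (T (south u)) \<noteq> 1})"
    by auto
  then have "coinv a T = card (\<Union>u\<in>dg a. (\<lambda>v. (u, v, south u)) ` {v \<in> Arm a u. chi3 (T u) (T v) (T (south u)) \<noteq> 1})"
    unfolding coinv_def by simp
  also have "\<dots> = (\<Sum>u\<in>dg a. card ((\<lambda>v. (u, v, south u)) ` {v \<in> Arm a u. chi3 (T u) (T v) (T (south u)) \<noteq> 1}))"
    by (rule card_UN_disjoint) (auto simp: finite_dg finite_Arm)
  also have "\<dots> = (\<Sum>u\<in>dg a. card {v \<in> Arm a u. chi3 (T u) (T v) (T (south u)) \<noteq> 1})"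
    by (rule sum.cong) (auto simp: card_image inj_on_def)
  finally show ?thesis .
qed

lemma wt_prod: "wt a T = (\<Prod>u\<in>dg a. gw a T u)"
proof -
  have m: "maj a T = (\<Sum>u\<in>dg a. if T (south u) < T u then leg a u + 1 else 0)"
    unfolding maj_def by (rule sum.inter_filter[OF finite_dg])
  have p: "(\<Prod>u \<in> {u \<in> dg a. T u \<noteq> T (south u)}.
        (1 - tv) / (1 - qv ^ (1 + leg a u) * tv ^ (1 + arm a u))) =
        (\<Prod>u\<in>dg a. if T u \<noteq> T (south u) then (1 - tv) / (1 - qv ^ (1 + leg a u) * tv ^ (1 + arm a u)) else 1)"
    by (rule prod.inter_filter[OF finite_dg])
  show ?thesis unfolding wt_def m coinv_sum p power_sum gw_def prod.distrib ..
qed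



lemma Fpow: "Fract (a::'a::idom) 1 ^ n = Fract (a ^ n) 1"
  by (induction n) (simp_all add: One_fract_def)

lemma den_nz:
  assumes "k \<ge> 1"
  shows "1 - qv ^ k * tv ^ j \<noteq> 0"
proof
  let ?P = "[:[:0, 1:]:] :: rat poly poly" and ?R = "[:0, 1:] :: rat poly poly"
  assume h: "1 - qv ^ k * tv ^ j = 0"
  have "1 - qv ^ k * tv ^ j = Fract (1 - ?P ^ k * ?R ^ j) 1"
    unfolding qv_def tv_def Fpow mult_fract One_fract_def by simp
  with h have "Fract (1 - ?P ^ k * ?R ^ j) 1 = Fract 0 1" by (simp add: Zero_fract_def)
  then have z: "1 - ?P ^ k * ?R ^ j = 0" by (simp add: eq_fract)
  have "poly (poly (1 - ?P ^ k * ?R ^ j) 0) 0 = 1"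
    using assms by (simp add: poly_power zero_power)
  with z show False by simp
qed


lemma card_filter_int: "finite C \<Longrightarrow> int (card {v \<in> C. P v}) = (\<Sum>v\<in>C. if P v then 1 else 0)"
proof -
  assume f: "finite C"
  have "card {v \<in> C. P v} = (\<Sum>v\<in>{v \<in> C. P v}. 1)" by simp
  also have "\<dots> = (\<Sum>v\<in>C. if P v then 1 else 0)" by (rule sum.inter_filter[OF f])
  finally show ?thesis by (auto simp: of_nat_sum intro!: sum.cong)
qed

lemma Kint: "finite C \<Longrightarrow> int (card {v \<in> C. chi3 x (f v) y \<noteq> 1}) = (\<Sum>v\<in>C. 1 - chi3 x (f v) y)"
  unfolding card_filter_int by (rule sum.cong) (use chi3_01 in auto)

lemma Krel:
  fixes C :: "'b set" and f :: "'b \<Rightarrow> nat"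
  assumes "finite C"
  defines "K \<equiv> \<lambda>x y. card {v \<in> C. chi3 x (f v) y \<noteq> 1}"
  shows "int (K c b) + int (K d a) + int (card C) * (chi c a + chi d b) =
         int (K c a) + int (K d b) + int (card C) * (chi c b + chi d a)"
proof -
  have "int (K c b) + int (K d a) + int (card C) * (chi c a + chi d b) =
      (\<Sum>v\<in>C. (1 - chi3 c (f v) b) + (1 - chi3 d (f v) a) + (chi c a + chi d b))"
    unfolding K_def Kint[OF assms(1)] sum.distrib by (simp add: distrib_left)
  also have "\<dots> = (\<Sum>v\<in>C. (1 - chi3 c (f v) a) + (1 - chi3 d (f v) b) + (chi c b + chi d a))"
    by (rule sum.cong) (auto simp: chi3_def)
  also have "\<dots> = int (K c a) + int (K d b) + int (card C) * (chi c b + chi d a)"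
    unfolding K_def Kint[OF assms(1)] sum.distrib by (simp add: distrib_left)
  finally show ?thesis .
qed

lemma tele:
  fixes f :: "nat \<Rightarrow> 'a::comm_ring_1"
  shows "(\<Sum>h\<le>m. (\<Prod>r<h. f r) * (1 - f h)) = 1 - (\<Prod>r\<le>m. f r)"
proof (induction m)
  case 0
  then show ?case by simp
next
  case (Suc m)
  have "(\<Sum>h\<le>Suc m. (\<Prod>r<h. f r) * (1 - f h)) = (1 - (\<Prod>r\<le>m. f r)) + (\<Prod>r<Suc m. f r) * (1 - f (Suc m))"
    using Suc by simp
  also have "\<dots> = 1 - (\<Prod>r\<le>Suc m. f r)"
    by (simp add: lessThan_Suc_atMost algebra_simps)
  finally show ?case .
qed

lemma RH_bc: "a \<noteq> b \<Longrightarrow> c \<noteq> d \<Longrightarrow> a \<noteq> d \<Longrightarrow> b = c \<Longrightarrow> RH Q t A a b c d = 0"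
proof -
  assume h: "a \<noteq> b" "c \<noteq> d" "a \<noteq> d" "b = c"
  then have "{a, b, c, d} = {a, b, d}" by auto
  then have "card {a, b, c, d} = 3" using h by (auto intro!: card3)
  then show ?thesis unfolding RH_def using h by simp
qed

lemma RH_bd: "a \<noteq> b \<Longrightarrow> c \<noteq> d \<Longrightarrow> b = d \<Longrightarrow> RH Q t A a b c d = 1"
proof -
  assume h: "a \<noteq> b" "c \<noteq> d" "b = d"
  show ?thesis
  proof (cases "a = c")
    case True
    then have "{a, b, c, d} = {a, b}" using h by auto
    then have "card {a, b, c, d} = 2" using h by simp
    then show ?thesis unfolding RH_def using h True by simp
  next
    case False
    then have "{a, b, c, d} = {a, b, c}" using h by auto
    then have "card {a, b, c, d} = 3" using h False by (auto intro!: card3)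
    then show ?thesis unfolding RH_def using h by simp
  qed
qed

locale cfg =
  fixes al :: "nat list" and i :: nat
  assumes i1: "1 \<le> i" and iN: "i < length al" and heq: "col al (Suc i) = col al i"
begin

lemma adg_pim: "pim i h u \<in> adg al \<longleftrightarrow> u \<in> adg al"
  using i1 iN heq by (cases u) (auto simp: pim_def adg_iff)

lemma dg_pim: "pim i h u \<in> dg al \<longleftrightarrow> u \<in> dg al"
  using i1 iN heq by (cases u) (auto simp: pim_def dg_iff)

lemma Arm_pim:
  assumes "fst u \<noteq> i" "fst u \<noteq> Suc i" "v \<in> Arm al u"
  shows "pim i h v \<in> Arm al u"
proof -
  obtain j r where u: "u = (j, r)" by (cases u)
  obtain j' r' where v: "v = (j', r')" by (cases v)
  show ?thesis using assms i1 iN heq unfolding u v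
    by (auto simp: pim_def adg_iff dg_iff)
qed

lemma lt_i: "x < Suc i \<Longrightarrow> col al x < col al i \<Longrightarrow> x < i"
  by (metis less_SucE less_irrefl)

lemma Arm_i:
  assumes "1 \<le> r" "r \<le> col al i"
  shows "Arm al (i, r) = insert (Suc i, r) (Arm al (Suc i, r))"
    and "(Suc i, r) \<notin> Arm al (Suc i, r)"
    and "v \<in> Arm al (Suc i, r) \<Longrightarrow> fst v \<noteq> i \<and> fst v \<noteq> Suc i"
  using assms i1 iN heq lt_i by (auto simp: adg_iff dg_iff)


lemma split_prod:
  fixes g :: "nat \<times> nat \<Rightarrow> 'b::comm_monoid_mult"
  shows "(\<Prod>u\<in>dg al. g u) = (\<Prod>u\<in>{u \<in> dg al. fst u \<noteq> i \<and> fst u \<noteq> Suc i}. g u) *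
          (\<Prod>r\<in>{1..col al i}. g (i, r) * g (Suc i, r))"
proof -
  let ?C = "(\<lambda>r. (i, r)) ` {1..col al i} \<union> (\<lambda>r. (Suc i, r)) ` {1..col al i}"
  have sub: "?C \<subseteq> dg al" using i1 iN heq by (auto simp: dg_iff)
  have diff: "dg al - ?C = {u \<in> dg al. fst u \<noteq> i \<and> fst u \<noteq> Suc i}"
    using i1 iN heq by (auto simp: dg_iff)
  have "(\<Prod>u\<in>dg al. g u) = (\<Prod>u\<in>dg al - ?C. g u) * (\<Prod>u\<in>?C. g u)"
    by (rule prod.subset_diff[OF sub finite_dg])
  also have "(\<Prod>u\<in>?C. g u) = (\<Prod>u\<in>(\<lambda>r. (i, r)) ` {1..col al i}. g u) * (\<Prod>u\<in>(\<lambda>r. (Suc i, r)) ` {1..col al i}. g u)"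
    by (rule prod.union_disjoint) auto
  also have "\<dots> = (\<Prod>r\<in>{1..col al i}. g (i, r)) * (\<Prod>r\<in>{1..col al i}. g (Suc i, r))"
    by (simp add: prod.reindex inj_on_def)
  also have "\<dots> = (\<Prod>r\<in>{1..col al i}. g (i, r) * g (Suc i, r))"
    by (rule prod.distrib[symmetric])
  finally show ?thesis unfolding diff .
qed

lemma gw_other:
  assumes "u \<in> dg al" "fst u \<noteq> i" "fst u \<noteq> Suc i"
  shows "gw al (T \<circ> pim i h) u = gw al T u"
proof -
  obtain j r where u: "u = (j, r)" by (cases u)
  have fu: "pim i h u = u" "pim i h (south u) = south u" using assms u by (auto simp: pim_simps)
  define P where "P v = (chi3 (T u) v (T (south u)) \<noteq> 1)" for v
  have "{v \<in> Arm al u. P (T (pim i h v))} = pim i h ` {v \<in> Arm al u. P (T v)}"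
  proof (intro equalityI subsetI)
    fix v assume "v \<in> {v \<in> Arm al u. P (T (pim i h v))}"
    then show "v \<in> pim i h ` {v \<in> Arm al u. P (T v)}"
      using Arm_pim[OF assms(2,3), of v h] by (auto intro!: image_eqI[where x = "pim i h v"])
  next
    fix v assume "v \<in> pim i h ` {v \<in> Arm al u. P (T v)}"
    then show "v \<in> {v \<in> Arm al u. P (T (pim i h v))}"
      using Arm_pim[OF assms(2,3)] by auto
  qed
  then have "card {v \<in> Arm al u. P (T (pim i h v))} = card {v \<in> Arm al u. P (T v)}"
    using card_image[OF inj_on_subset[OF inj_pim subset_UNIV]] by simp
  then show ?thesis unfolding gw_def using fu by (simp add: P_def)
qed


definition Kf :: "(nat \<times> nat \<Rightarrow> nat) \<Rightarrow> nat \<Rightarrow> nat \<Rightarrow> nat \<Rightarrow> nat" where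
  "Kf X r x y = card {v \<in> Arm al (Suc i, r). chi3 x (X v) y \<noteq> 1}"

lemma card_insert_filter:
  assumes "finite C" "x \<notin> C"
  shows "card {v \<in> insert x C. P v} = (if P x then 1 else 0) + card {v \<in> C. P v}"
proof -
  have "{v \<in> insert x C. P v} = (if P x then insert x {v \<in> C. P v} else {v \<in> C. P v})" by auto
  then show ?thesis using assms by auto
qed

lemma gw_row:
  assumes r: "1 \<le> r" "r \<le> col al i"
  shows "gw al X (i, r) * gw al X (Suc i, r) =
    RG (qv ^ (col al i - r + 1)) tv (arm al (Suc i, r)) (Kf X r)
       (X (i, r - 1)) (X (Suc i, r - 1)) (X (i, r)) (X (Suc i, r))"
proof -
  note A = Arm_i[OF r]
  let ?C = "Arm al (Suc i, r)"
  let ?Q = "qv ^ (col al i - r + 1)"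
  have arm_i: "arm al (i, r) = Suc (arm al (Suc i, r))"
    unfolding arm_def A(1) by (rule card.insert[OF finite_Arm A(2)])
  have cnt: "card {v \<in> Arm al (i, r). chi3 (X (i, r)) (X v) (X (i, r - 1)) \<noteq> 1} =
     Kf X r (X (i, r)) (X (i, r - 1)) + (if chi3 (X (i, r)) (X (Suc i, r)) (X (i, r - 1)) \<noteq> 1 then 1 else 0)"
    unfolding A(1) Kf_def by (subst card_insert_filter[OF finite_Arm A(2)]) simp
  have g1: "gw al X (i, r) = (if X (i, r - 1) < X (i, r) then ?Q else 1) *
     tv ^ (Kf X r (X (i, r)) (X (i, r - 1)) + (if chi3 (X (i, r)) (X (Suc i, r)) (X (i, r - 1)) \<noteq> 1 then 1 else 0)) *
     Ef ?Q tv (arm al (Suc i, r) + 1) (X (i, r)) (X (i, r - 1))"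
    unfolding gw_def south.simps leg.simps cnt Ef_def arm_i by (simp add: add_ac del: Arm.simps)
  have g2: "gw al X (Suc i, r) = (if X (Suc i, r - 1) < X (Suc i, r) then ?Q else 1) *
     tv ^ (Kf X r (X (Suc i, r)) (X (Suc i, r - 1))) *
     Ef ?Q tv (arm al (Suc i, r)) (X (Suc i, r)) (X (Suc i, r - 1))"
    unfolding gw_def Ef_def Kf_def using heq by (simp add: add_ac del: Arm.simps)
  show ?thesis unfolding g1 g2 RG_def by (simp add: power_add mult_ac del: Arm.simps)
qed


lemma rho_RH:
  assumes "r < col al i"
  shows "rho al i X r = RH (qv ^ (col al i - Suc r + 1)) tv (arm al (Suc i, Suc r))
           (X (i, r)) (X (Suc i, r)) (X (i, Suc r)) (X (Suc i, Suc r))"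
proof -
  have ne: "(r = col al i) = False" using assms by simp
  have "rho al i X r = RH (qv ^ (leg al (i + 1, r + 1) + 1)) tv (arm al (i + 1, r + 1))
           (X (i, r)) (X (i + 1, r)) (X (i, r + 1)) (X (i + 1, r + 1))"
    unfolding rho_def RH_def Let_def ne if_False ..
  moreover have "leg al (i + 1, r + 1) = col al i - Suc r" using heq by simp
  ultimately show ?thesis by simp
qed

lemma na_row: "nonattacking al X \<Longrightarrow> r \<le> col al i \<Longrightarrow> X (i, r) \<noteq> X (Suc i, r)"
proof -
  assume na: "nonattacking al X" and r: "r \<le> col al i"
  have "(i, r) \<in> adg al" "(Suc i, r) \<in> adg al" using i1 iN heq r by (auto simp: adg_iff)
  moreover have "attacks (i, r) (Suc i, r)" by simp
  ultimately show ?thesis using na unfolding nonattacking_def by blast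
qed

lemma na_diag: "nonattacking al X \<Longrightarrow> r < col al i \<Longrightarrow> X (i, r) \<noteq> X (Suc i, Suc r)"
proof -
  assume na: "nonattacking al X" and r: "r < col al i"
  have "(i, r) \<in> adg al" "(Suc i, Suc r) \<in> adg al" using i1 iN heq r by (auto simp: adg_iff)
  moreover have "attacks (i, r) (Suc i, Suc r)" by simp
  ultimately show ?thesis using na unfolding nonattacking_def by blast
qed

lemma Kf_pim: "1 \<le> r \<Longrightarrow> r \<le> col al i \<Longrightarrow> Kf (T \<circ> pim i h) r = Kf T r"
proof -
  assume r: "1 \<le> r" "r \<le> col al i"
  have "\<And>v. v \<in> Arm al (Suc i, r) \<Longrightarrow> pim i h v = v"
    using Arm_i(3)[OF r] by (metis pim_simps(3) prod.collapse)
  then show ?thesis unfolding Kf_def by (auto intro!: ext arg_cong[where f = card])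
qed

lemma rho_top: "rho al i X (col al i) = 0"
  unfolding rho_def by simp


lemma prod_w:
  fixes f :: "nat \<Rightarrow> qt"
  assumes h: "h \<le> col al i" and top: "f (col al i) = 0"
  shows "(\<Prod>r\<in>{1..col al i}. (if r \<le> h then f (r - 1) else 1) * (if r = Suc h then 1 - f h else 1))
       = (\<Prod>r<h. f r) * (1 - f h)"
proof -
  have "(\<Prod>r\<in>{1..col al i}. (if r \<le> h then f (r - 1) else 1)) = (\<Prod>r\<in>{r \<in> {1..col al i}. r \<le> h}. f (r - 1))"
    by (rule prod.inter_filter[symmetric]) simp
  also have "{r \<in> {1..col al i}. r \<le> h} = Suc ` {..<h}"
  proof -
    have "x \<in> Suc ` {..<h}" if "1 \<le> x" "x \<le> h" for x using that by (intro image_eqI[of _ _ "x - 1"]) auto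
    then show ?thesis using h by auto
  qed
  also have "(\<Prod>r\<in>Suc ` {..<h}. f (r - 1)) = (\<Prod>r<h. f r)" by (simp add: prod.reindex)
  finally have 1: "(\<Prod>r\<in>{1..col al i}. (if r \<le> h then f (r - 1) else 1)) = (\<Prod>r<h. f r)" .
  have 2: "(\<Prod>r\<in>{1..col al i}. (if r = Suc h then 1 - f h else 1)) = 1 - f h"
    using h top by (cases "h = col al i") (auto simp: prod.delta)
  show ?thesis unfolding prod.distrib 1 2 ..
qed

lemma wt_identity:
  assumes naT: "nonattacking al T" and naU: "nonattacking al (T \<circ> pim i h)" and h: "h \<le> col al i"
  shows "wt al T * ((\<Prod>r<h. rho al i T r) * (1 - rho al i T h)) =
         wt al (T \<circ> pim i h) * ((\<Prod>r<h. rho al i (T \<circ> pim i h) r) * (1 - rho al i (T \<circ> pim i h) h))"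
proof -
  define U where "U = T \<circ> pim i h"
  define w where "w X r = (if r \<le> h then rho al i X (r - 1) else 1) * (if r = Suc h then 1 - rho al i X h else 1)" for X r
  define Oth where "Oth X = (\<Prod>u\<in>{u \<in> dg al. fst u \<noteq> i \<and> fst u \<noteq> Suc i}. gw al X u)" for X
  define F where "F X r = gw al X (i, r) * gw al X (Suc i, r)" for X r
  have wtX: "wt al X * ((\<Prod>r<h. rho al i X r) * (1 - rho al i X h)) = Oth X * (\<Prod>r\<in>{1..col al i}. F X r * w X r)" for X
  proof -
    have "wt al X = Oth X * (\<Prod>r\<in>{1..col al i}. F X r)"
      unfolding wt_prod Oth_def F_def by (rule split_prod)
    moreover have "(\<Prod>r\<in>{1..col al i}. w X r) = (\<Prod>r<h. rho al i X r) * (1 - rho al i X h)"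
      unfolding w_def by (rule prod_w[of h "rho al i X", OF h rho_top])
    ultimately show ?thesis by (simp add: prod.distrib mult_ac)
  qed
  have oth: "Oth U = Oth T"
    unfolding Oth_def U_def by (rule prod.cong) (auto intro: gw_other)
  have Uv: "U (i, r) = (if r \<le> h then T (Suc i, r) else T (i, r))"
           "U (Suc i, r) = (if r \<le> h then T (i, r) else T (Suc i, r))" for r
    unfolding U_def by (auto simp: pim_simps)
  have rows: "F T r * w T r = F U r * w U r" if r: "1 \<le> r" "r \<le> col al i" for r
  proof -
    let ?Q = "qv ^ (col al i - r + 1)" and ?A = "arm al (Suc i, r)" and ?K = "Kf T r"
    have KU: "Kf U r = Kf T r" unfolding U_def by (rule Kf_pim[OF r])
    have FT: "F T r = RG ?Q tv ?A ?K (T (i, r - 1)) (T (Suc i, r - 1)) (T (i, r)) (T (Suc i, r))"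
      unfolding F_def by (rule gw_row[OF r])
    have FU: "F U r = RG ?Q tv ?A ?K (U (i, r - 1)) (U (Suc i, r - 1)) (U (i, r)) (U (Suc i, r))"
      unfolding F_def KU[symmetric] by (rule gw_row[OF r])
    have D1: "1 - ?Q * tv ^ (?A + 1) \<noteq> 0" by (rule den_nz) simp
    have D2: "1 - ?Q * tv ^ (?A + 2) \<noteq> 0" by (rule den_nz) simp
    have sr: "Suc (r - 1) = r" using r by simp
    have rhoX: "rho al i X (r - 1) = RH ?Q tv ?A (X (i, r - 1)) (X (Suc i, r - 1)) (X (i, r)) (X (Suc i, r))" for X
      using rho_RH[of "r - 1" X] r unfolding sr by simp
    consider (lo) "r \<le> h" | (bd) "r = Suc h" | (hi) "r > Suc h" by linarith
    then show ?thesis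
    proof cases
      case lo
      have wT: "w T r = rho al i T (r - 1)" and wU: "w U r = rho al i U (r - 1)" unfolding w_def using lo by auto
      have ab: "T (i, r - 1) \<noteq> T (Suc i, r - 1)" using na_row[OF naT, of "r - 1"] r by simp
      have cd: "T (i, r) \<noteq> T (Suc i, r)" using na_row[OF naT, of r] r by simp
      have ad: "T (i, r - 1) \<noteq> T (Suc i, r)" using na_diag[OF naT, of "r - 1"] r sr by simp
      have bc: "T (Suc i, r - 1) \<noteq> T (i, r)"
        using na_diag[OF naU[folded U_def], of "r - 1"] r sr lo unfolding Uv by simp
      have lo': "r - 1 \<le> h" using lo by simp
      show ?thesis unfolding FT FU wT wU rhoX Uv using lo lo'
        using interior[OF ab cd ad bc D1 D2, of ?K] by simp
    next
      case bd
      have wT: "w T r = 1 - rho al i T h" and wU: "w U r = 1 - rho al i U h" unfolding w_def using bd by auto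
      have hm: "h = r - 1" using bd by simp
      have ab: "T (i, r - 1) \<noteq> T (Suc i, r - 1)" using na_row[OF naT, of "r - 1"] r by simp
      have cd: "T (i, r) \<noteq> T (Suc i, r)" using na_row[OF naT, of r] r by simp
      have ad: "T (i, r - 1) \<noteq> T (Suc i, r)" using na_diag[OF naT, of "r - 1"] r sr by simp
      have bd': "T (Suc i, r - 1) \<noteq> T (Suc i, r)"
        using na_diag[OF naU[folded U_def], of "r - 1"] r sr bd unfolding Uv by simp
      have rel: "int (?K (T (i, r)) (T (Suc i, r - 1))) + int (?K (T (Suc i, r)) (T (i, r - 1))) +
           int ?A * (chi (T (i, r)) (T (i, r - 1)) + chi (T (Suc i, r)) (T (Suc i, r - 1))) =
           int (?K (T (i, r)) (T (i, r - 1))) + int (?K (T (Suc i, r)) (T (Suc i, r - 1))) +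
           int ?A * (chi (T (i, r)) (T (Suc i, r - 1)) + chi (T (Suc i, r)) (T (i, r - 1)))"
        unfolding Kf_def arm_def by (rule Krel[OF finite_Arm])
      show ?thesis unfolding FT FU wT wU hm rhoX Uv using bd
        using boundary[OF ab cd ad bd' D1 D2 rel] by simp
    next
      case hi
      have wT: "w T r = 1" and wU: "w U r = 1" unfolding w_def using hi by auto
      have hi': "\<not> r - 1 \<le> h" "\<not> r \<le> h" using hi by auto
      show ?thesis unfolding FT FU wT wU Uv using hi' by simp
    qed
  qed
  have "wt al T * ((\<Prod>r<h. rho al i T r) * (1 - rho al i T h)) = Oth T * (\<Prod>r\<in>{1..col al i}. F T r * w T r)"
    by (rule wtX)
  also have "\<dots> = Oth U * (\<Prod>r\<in>{1..col al i}. F U r * w U r)"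
    using oth rows by (auto intro!: prod.cong)
  also have "\<dots> = wt al U * ((\<Prod>r<h. rho al i U r) * (1 - rho al i U h))"
    by (rule wtX[symmetric])
  finally show ?thesis unfolding U_def .
qed


lemma unique_h:
  assumes na: "nonattacking al T" and h: "h \<le> col al i" "h' \<le> col al i" and eq: "Omega i h T = Omega i h' T"
  shows "h = h'"
proof (rule ccontr)
  assume "h \<noteq> h'"
  then consider "h < h'" | "h' < h" by linarith
  then show False
  proof cases
    case 1
    have "T (pim i h (i, h')) = T (pim i h' (i, h'))" using eq unfolding Omega_eq by (metis comp_apply)
    then have "T (i, h') = T (Suc i, h')" using 1 by (simp add: pim_simps)
    then show False using na_row[OF na h(2)] by simp
  next
    case 2
    have "T (pim i h (i, h)) = T (pim i h' (i, h))" using eq unfolding Omega_eq by (metis comp_apply)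
    then have "T (Suc i, h) = T (i, h)" using 2 by (simp add: pim_simps)
    then show False using na_row[OF na h(1)] by simp
  qed
qed

lemma Pi_eq:
  assumes na: "nonattacking al T" and h: "h \<le> col al i"
  shows "Pi al i T (Omega i h T) = (\<Prod>r<h. rho al i T r) * (1 - rho al i T h)"
proof -
  have ex: "\<exists>h' \<le> col al i. Omega i h T = Omega i h' T" using h by blast
  have "(SOME h'. h' \<le> col al i \<and> Omega i h T = Omega i h' T) = h"
  proof (rule some_equality)
    show "h \<le> col al i \<and> Omega i h T = Omega i h T" using h by simp
  next
    fix h' assume "h' \<le> col al i \<and> Omega i h T = Omega i h' T"
    then show "h' = h" using unique_h[OF na h] by auto
  qed
  then show ?thesis unfolding Pi_def using ex by simp
qed

lemma attack_pim:
  assumes "attacks u v" "\<not> attacks (pim i h u) (pim i h v)"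
  shows "(\<exists>r < h. (pim i h u = (Suc i, r) \<and> pim i h v = (i, Suc r)) \<or> (pim i h v = (Suc i, r) \<and> pim i h u = (i, Suc r)))
         \<or> (pim i h u = (Suc i, h) \<and> pim i h v = (Suc i, Suc h)) \<or> (pim i h v = (Suc i, h) \<and> pim i h u = (Suc i, Suc h))"
proof -
  obtain j r where u: "u = (j, r)" by (cases u)
  obtain j' r' where v: "v = (j', r')" by (cases v)
  show ?thesis using assms unfolding u v by (auto simp: pim_def split: if_splits)
qed

lemma na_omega:
  assumes na: "nonattacking al T" and h: "h \<le> col al i"
    and c1: "\<forall>r<h. T (Suc i, r) \<noteq> T (i, Suc r)"
    and c2: "h < col al i \<longrightarrow> T (Suc i, h) \<noteq> T (Suc i, Suc h)"
  shows "nonattacking al (T \<circ> pim i h)"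
  unfolding nonattacking_def
proof (intro ballI impI)
  fix u v assume uv: "u \<in> adg al" "v \<in> adg al" "attacks u v"
  have uv': "pim i h u \<in> adg al" "pim i h v \<in> adg al" using uv adg_pim by auto
  show "(T \<circ> pim i h) u \<noteq> (T \<circ> pim i h) v"
  proof (cases "attacks (pim i h u) (pim i h v)")
    case True
    then show ?thesis using na uv' unfolding nonattacking_def by auto
  next
    case False
    note cs = attack_pim[OF uv(3) False]
    have "Suc h \<le> col al i" if "pim i h u = (Suc i, Suc h) \<or> pim i h v = (Suc i, Suc h)"
      using that uv' heq by (auto simp: adg_iff)
    then show ?thesis using cs c1 c2 by (auto simp: Suc_le_eq)
  qed
qed

lemma filling_omega:
  assumes f: "filling al tau T" and len: "length tau = length al"
  shows "filling al (perm_si tau i) (T \<circ> pim i h)"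
  unfolding filling_def
proof (intro conjI allI ballI impI)
  fix u assume "u \<in> adg al"
  then show "(T \<circ> pim i h) u \<in> {1..length al}" using f adg_pim unfolding filling_def by auto
next
  fix u assume "u \<notin> adg al"
  then have "pim i h u \<notin> adg al" using adg_pim by simp
  then show "(T \<circ> pim i h) u = 0" using f unfolding filling_def comp_apply by blast
next
  fix j assume j: "1 \<le> j \<and> j \<le> length al"
  have T0: "T (j', 0) = tau ! (j' - 1)" if "1 \<le> j'" "j' \<le> length al" for j'
    using f that unfolding filling_def col_def by auto
  show "(T \<circ> pim i h) (j, 0) = col (perm_si tau i) j"
    using j i1 iN len T0[of i] T0[of "Suc i"] T0[of j]
    unfolding col_def perm_si_def by (auto simp: pim_def nth_list_update)
qed

lemma content_omega: "content al (T \<circ> pim i h) = content al T"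
proof -
  have "card {u \<in> dg al. (T \<circ> pim i h) u = k} = card {u \<in> dg al. T u = k}" for k
  proof -
    have "{u \<in> dg al. (T \<circ> pim i h) u = k} = pim i h ` {u \<in> dg al. T u = k}"
      using dg_pim by (auto intro!: image_eqI[where x = "pim i h _"])
    then show ?thesis using card_image[OF inj_on_subset[OF inj_pim subset_UNIV]] by simp
  qed
  then show ?thesis unfolding content_def by simp
qed

lemma finite_NAF: "finite (NAF al tau)"
proof -
  have "NAF al tau \<subseteq> {f. \<forall>x. (x \<in> adg al \<longrightarrow> f x \<in> {1..length al}) \<and> (x \<notin> adg al \<longrightarrow> f x = 0)}"
    unfolding NAF_def filling_def by auto
  then show ?thesis by (rule finite_subset) (intro finite_set_of_finite_funs finite_adg finite_atLeastAtMost)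
qed

lemma finite_NAFc: "finite (NAFc al tau beta)"
  unfolding NAFc_def using finite_NAF by simp

lemma perm_si_perm_si: "length tau = length al \<Longrightarrow> perm_si (perm_si tau i) i = tau"
  unfolding perm_si_def using i1 iN by (auto intro!: nth_equalityI simp: nth_list_update)


lemma row_sum:
  assumes T: "T \<in> NAFc al tau beta" and len: "length tau = length al"
  shows "(\<Sum>U\<in>NAFc al (perm_si tau i) beta. Pi al i T U) = 1"
proof -
  let ?m = "col al i"
  let ?S = "NAFc al (perm_si tau i) beta"
  define c where "c h = (\<Prod>r<h. rho al i T r) * (1 - rho al i T h)" for h
  define H where "H = {h. h \<le> ?m \<and> c h \<noteq> 0}"
  have na: "nonattacking al T" and fT: "filling al tau T" and ct: "content al T = beta"
    using T unfolding NAFc_def NAF_def by auto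
  have good: "Omega i h T \<in> ?S" if hH: "h \<in> H" for h
  proof -
    have h: "h \<le> ?m" and ch: "c h \<noteq> 0" using hH unfolding H_def by auto
    have nz: "rho al i T r \<noteq> 0" if "r < h" for r using ch that unfolding c_def by auto
    have n1: "rho al i T h \<noteq> 1" using ch unfolding c_def by auto
    have c1: "\<forall>r<h. T (Suc i, r) \<noteq> T (i, Suc r)"
    proof (intro allI impI notI)
      fix r assume r: "r < h" and eq: "T (Suc i, r) = T (i, Suc r)"
      have rm: "r < ?m" using r h by simp
      have "rho al i T r = 0" unfolding rho_RH[OF rm]
        by (rule RH_bc[OF na_row[OF na] na_row[OF na] na_diag[OF na rm] eq]) (use rm in auto)
      then show False using nz[OF r] by simp
    qed
    have c2: "h < ?m \<longrightarrow> T (Suc i, h) \<noteq> T (Suc i, Suc h)"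
    proof (intro impI notI)
      assume hm: "h < ?m" and eq: "T (Suc i, h) = T (Suc i, Suc h)"
      have "rho al i T h = 1" unfolding rho_RH[OF hm]
        by (rule RH_bd[OF na_row[OF na] na_row[OF na] eq]) (use hm in auto)
      then show False using n1 by simp
    qed
    show ?thesis unfolding Omega_eq NAFc_def NAF_def
      using na_omega[OF na h c1 c2] filling_omega[OF fT len] content_omega ct by simp
  qed
  have fin: "finite ?S" by (rule finite_NAFc)
  have sub: "(\<lambda>h. Omega i h T) ` H \<subseteq> ?S" using good by auto
  have "(\<Sum>U\<in>?S. Pi al i T U) = (\<Sum>U\<in>(\<lambda>h. Omega i h T) ` H. Pi al i T U)"
  proof (rule sum.mono_neutral_right[OF fin sub], rule ballI)
    fix U assume U: "U \<in> ?S - (\<lambda>h. Omega i h T) ` H"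
    show "Pi al i T U = 0"
    proof (cases "\<exists>h \<le> ?m. U = Omega i h T")
      case True
      then obtain h where h: "h \<le> ?m" "U = Omega i h T" by blast
      then have "h \<notin> H" using U by auto
      then have "c h = 0" using h unfolding H_def by auto
      then show ?thesis using Pi_eq[OF na h(1)] h unfolding c_def by simp
    next
      case False
      then show ?thesis unfolding Pi_def by auto
    qed
  qed
  also have "\<dots> = (\<Sum>h\<in>H. Pi al i T (Omega i h T))"
  proof (rule sum.reindex[unfolded comp_def])
    show "inj_on (\<lambda>h. Omega i h T) H"
      using unique_h[OF na] unfolding H_def inj_on_def by auto
  qed
  also have "\<dots> = (\<Sum>h\<in>H. c h)"
    using Pi_eq[OF na] unfolding H_def c_def by auto
  also have "\<dots> = (\<Sum>h\<le>?m. c h)"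
    by (rule sum.mono_neutral_left) (auto simp: H_def)
  also have "\<dots> = 1 - (\<Prod>r\<le>?m. rho al i T r)"
    unfolding c_def by (rule tele)
  also have "(\<Prod>r\<le>?m. rho al i T r) = 0"
    using rho_top[of T] by (auto intro: prod_zero)
  finally show ?thesis by simp
qed

lemma wt_sym:
  assumes naT: "nonattacking al T" and naU: "nonattacking al U"
  shows "wt al T * Pi al i T U = wt al U * Pi al i U T"
proof (cases "\<exists>h \<le> col al i. U = Omega i h T")
  case True
  then obtain h where h: "h \<le> col al i" "U = Omega i h T" by blast
  have TU: "T = Omega i h U" using h Omega_Omega by simp
  have U': "U = T \<circ> pim i h" using h Omega_eq by simp
  have "wt al T * Pi al i T U = wt al T * ((\<Prod>r<h. rho al i T r) * (1 - rho al i T h))"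
    using Pi_eq[OF naT h(1)] h(2) by simp
  also have "\<dots> = wt al U * ((\<Prod>r<h. rho al i U r) * (1 - rho al i U h))"
    unfolding U' by (rule wt_identity[OF naT _ h(1)]) (use naU U' in simp)
  also have "\<dots> = wt al U * Pi al i U T"
    using Pi_eq[OF naU h(1)] TU by simp
  finally show ?thesis .
next
  case False
  then have F2: "\<not> (\<exists>h \<le> col al i. T = Omega i h U)"
    using Omega_Omega by metis
  have "Pi al i T U = 0" unfolding Pi_def by (rule if_not_P[OF False])
  moreover have "Pi al i U T = 0" unfolding Pi_def by (rule if_not_P[OF F2])
  ultimately show ?thesis by simp
qed

end


theorem corollary3p12:
  fixes alpha sigma beta :: "nat list" and i :: nat
  assumes "is_perm (length alpha) sigma"
    and "1 \<le> i" and "i < length alpha"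
    and "col alpha i = col alpha (i + 1)"
    and "length beta = length alpha"
  shows "prob_bij (NAFc alpha sigma beta) (NAFc alpha (perm_si sigma i) beta)
           (wt alpha) (wt alpha) (Pi alpha i) (Pi alpha i)"
proof -
  interpret cfg alpha i using assms by unfold_locales auto
  have lens: "length sigma = length alpha"
    using assms(1) distinct_card[of sigma] unfolding is_perm_def by simp
  have lens': "length (perm_si sigma i) = length alpha"
    using lens unfolding perm_si_def by simp
  have r1: "\<forall>T\<in>NAFc alpha sigma beta. (\<Sum>U\<in>NAFc alpha (perm_si sigma i) beta. Pi alpha i T U) = 1"
    using row_sum[OF _ lens] by blast
  have r2: "\<forall>U\<in>NAFc alpha (perm_si sigma i) beta. (\<Sum>T\<in>NAFc alpha sigma beta. Pi alpha i U T) = 1"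
    using row_sum[OF _ lens'] unfolding perm_si_perm_si[OF lens] by blast
  have r3: "\<forall>T\<in>NAFc alpha sigma beta. \<forall>U\<in>NAFc alpha (perm_si sigma i) beta.
      wt alpha T * Pi alpha i T U = wt alpha U * Pi alpha i U T"
    using wt_sym unfolding NAFc_def NAF_def by blast
  show ?thesis unfolding prob_bij_def using r1 r2 r3 by blast
qed

end
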